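(* There exists no valid epistemic state that can be used to reach a logical contradiction in the Frauchiger-Renner setting in the toy theory.
   Context: Setting: Spekkens' toy theory in its general (stabilizer/quadrature) formulation, for systems of discrete dimension d (ontic states in $\mathbb{Z}_d^{2n}$) or continuous systems (ontic states in $\mathbb{R}^{2n}$). A valid epistemic state is a pair $(V,\vec v)$, where $V$ is a subspace/submodule of known quadrature observables that pairwise commute under the Poisson bracket $[f,g]=\sum_i f_{2i-1}g_{2i}-f_{2i}g_{2i-1}$, and $\vec v$ is a valuation; the state is the uniform distribution over the ontic states in $V^{\perp}+\vec v$. A measurement is a subspace $V_\pi$ of observables with outcomes $\vec v_\pi$ (outcome $\vec v_\pi$ is obtained iff the ontic state lies in $V_\pi^{\perp}+\vec v_\pi$). After obtaining outcome $\vec v_\pi$ the state is updated to $(V_\pi\oplus V_{\text{commute}},\vec v')$ with $\vec v'\in(V_\pi^{\perp}+\vec v_\pi)\cap(V_{\text{commute}}^{\perp}+\vec v)$, where $V_{\text{commute}}=\{\vec f\in V:[\vec f,\vec f_\pi]=0\ \forall \vec f_\pi\in V_\pi\}$. Frauchiger-Renner setting in the toy theory: four systems $R, A, S, B$ of arbitrary sizes, where $R$ and $S$ are the systems measured by Alice and Bob and $A$, $B$ are Alice's and Bob's memory registers; the global initial ontic state is $\vec o=(\vec o_R,\vec o_A,\vec o_S,\vec o_B)$ and the initial joint epistemic state $(V,\vec v)$ is arbitrary (all relevant correlations are encoded in it, since conditional preparation of non-orthogonal states is not possible in the toy theory). Measurements, in this order: at t=1 Alice measures an arbitrary observable subspace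 $V_A$ supported on $R$, calling outcome $\vec v_{A=1}$ "1"; at t=2 Bob measures an arbitrary $V_B$ supported on $S$, calling outcome $\vec v_{B=1}$ "1"; at t=3 Ursula measures an arbitrary $V_U$ supported on $RA$ (Alice's lab) with two distinct outcomes $\vec v_{U,ok}$, $\vec v_{U,fail}$ ($\vec v_{U,ok}-\vec v_{U,fail}\notin V_U^{\perp}$); at t=4 Wigner measures an arbitrary $V_W$ supported on $SB$ (Bob's lab) with two distinct outcomes $\vec v_{W,ok}$, $\vec v_{W,fail}$ ($\vec v_{W,ok}-\vec v_{W,fail}\notin V_W^{\perp}$). A statement "X = x ⟹ Y = y" means that, after updating the epistemic state on outcome x of X's measurement, outcome y of Y's measurement is predicted with certainty (probability 1). A logical contradiction (as in the quantum Frauchiger-Renner paradox) means: the joint outcome (Ursula = ok, Wigner = ok) has nonzero probability, and the certain inferences "U = ok ⟹ B = 1", "B = 1 ⟹ A = 1", "A = 1 ⟹ W = fail" all hold, giving the chain $(w=\text{ok}\wedge u=\text{ok})\implies b=1\implies a=1\implies w=\text{fail}$. *)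

theory Defs
  imports Complex_Main
begin

text \<open>Scalars: the ring Z_d (any d >= 2) or the reals.\<close>
definition toy_scalars :: "'k::comm_ring_1 itself \<Rightarrow> bool" where
  "toy_scalars _ \<longleftrightarrow>
     (finite (UNIV :: 'k set) \<and> (\<forall>x::'k. \<exists>n::nat. x = of_nat n)) \<or>
     (\<exists>\<phi>::'k \<Rightarrow> real. bij \<phi> \<and> (\<forall>x y. \<phi> (x + y) = \<phi> x + \<phi> y)
                        \<and> (\<forall>x y. \<phi> (x * y) = \<phi> x * \<phi> y) \<and> \<phi> 1 = 1)"

text \<open>Modes (degrees of freedom) are elements of a finite type 'm; each
  mode belongs to one of the four systems and carries two quadratures Q and P.  Ontic states
  and quadrature observables are vectors in 'k^(2n), represented as functions on 'm \<times> quad.\<close>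
datatype sysname = SysR | SysA | SysS | SysB

datatype quad = Q | P

type_synonym ('m, 'k) vec = "'m \<times> quad \<Rightarrow> 'k"

definition vzero :: "('m, 'k::comm_ring_1) vec" where
  "vzero = (\<lambda>j. 0)"

definition vadd :: "('m, 'k::comm_ring_1) vec \<Rightarrow> ('m, 'k) vec \<Rightarrow> ('m, 'k) vec" where
  "vadd x y = (\<lambda>j. x j + y j)"

definition vscale :: "'k::comm_ring_1 \<Rightarrow> ('m, 'k) vec \<Rightarrow> ('m, 'k) vec" where
  "vscale c x = (\<lambda>j. c * x j)"

text \<open>Value of observable f on ontic state m (Euclidean pairing).\<close>
definition dotp :: "('m::finite, 'k::comm_ring_1) vec \<Rightarrow> ('m, 'k) vec \<Rightarrow> 'k" where
  "dotp f x = (\<Sum>j\<in>UNIV. f j * x j)"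

definition pbracket :: "('m::finite, 'k::comm_ring_1) vec \<Rightarrow> ('m, 'k) vec \<Rightarrow> 'k" where
  "pbracket f g = (\<Sum>i\<in>UNIV. f (i, Q) * g (i, P) - f (i, P) * g (i, Q))"

definition submod :: "('m, 'k::comm_ring_1) vec set \<Rightarrow> bool" where
  "submod V \<longleftrightarrow> vzero \<in> V \<and> (\<forall>x\<in>V. \<forall>y\<in>V. vadd x y \<in> V) \<and> (\<forall>c. \<forall>x\<in>V. vscale c x \<in> V)"

definition isotropic :: "('m::finite, 'k::comm_ring_1) vec set \<Rightarrow> bool" where
  "isotropic V \<longleftrightarrow> (\<forall>f\<in>V. \<forall>g\<in>V. pbracket f g = 0)"

definition perp :: "('m::finite, 'k::comm_ring_1) vec set \<Rightarrow> ('m, 'k) vec set" where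
  "perp V = {x. \<forall>f\<in>V. dotp f x = 0}"

definition aff :: "('m::finite, 'k::comm_ring_1) vec set \<Rightarrow> ('m, 'k) vec \<Rightarrow> ('m, 'k) vec set" where
  "aff V v = {vadd x v | x. x \<in> perp V}"

definition sumsp :: "('m, 'k::comm_ring_1) vec set \<Rightarrow> ('m, 'k) vec set \<Rightarrow> ('m, 'k) vec set" where
  "sumsp A B = {vadd a b | a b. a \<in> A \<and> b \<in> B}"

text \<open>A valid epistemic state (V, v): V a subspace of pairwise commuting observables.
  It describes the uniform distribution on aff V v.\<close>
definition valid_state :: "('m::finite, 'k::comm_ring_1) vec set \<Rightarrow> ('m, 'k) vec \<Rightarrow> bool" where
  "valid_state V v \<longleftrightarrow> submod V \<and> isotropic V"

definition valid_meas :: "('m::finite, 'k::comm_ring_1) vec set \<Rightarrow> bool" where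
  "valid_meas V \<longleftrightarrow> submod V \<and> isotropic V"

definition supported_on ::
  "('m \<Rightarrow> sysname) \<Rightarrow> sysname set \<Rightarrow> ('m, 'k::comm_ring_1) vec set \<Rightarrow> bool" where
  "supported_on sys Ss V \<longleftrightarrow> (\<forall>f\<in>V. \<forall>i q. sys i \<notin> Ss \<longrightarrow> f (i, q) = 0)"

text \<open>Outcome vpi of measurement Vpi has nonzero probability in state (V, v).\<close>
definition outcome_possible ::
  "('m::finite, 'k::comm_ring_1) vec set \<Rightarrow> ('m, 'k) vec \<Rightarrow> ('m, 'k) vec set \<Rightarrow> ('m, 'k) vec \<Rightarrow> bool" where
  "outcome_possible V v Vpi vpi \<longleftrightarrow> aff V v \<inter> aff Vpi vpi \<noteq> {}"

text \<open>Outcome vpi of Vpi is obtained with certainty (probability 1) in state (V, v).\<close>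
definition outcome_certain ::
  "('m::finite, 'k::comm_ring_1) vec set \<Rightarrow> ('m, 'k) vec \<Rightarrow> ('m, 'k) vec set \<Rightarrow> ('m, 'k) vec \<Rightarrow> bool" where
  "outcome_certain V v Vpi vpi \<longleftrightarrow> aff V v \<subseteq> aff Vpi vpi"

text \<open>Measurement update rule.\<close>
definition V_commute ::
  "('m::finite, 'k::comm_ring_1) vec set \<Rightarrow> ('m, 'k) vec set \<Rightarrow> ('m, 'k) vec set" where
  "V_commute V Vpi = {f \<in> V. \<forall>g\<in>Vpi. pbracket f g = 0}"

definition upd_space ::
  "('m::finite, 'k::comm_ring_1) vec set \<Rightarrow> ('m, 'k) vec set \<Rightarrow> ('m, 'k) vec set" where
  "upd_space V Vpi = sumsp Vpi (V_commute V Vpi)"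

text \<open>The admissible valuations v' of the updated state.\<close>
definition upd_vals ::
  "('m::finite, 'k::comm_ring_1) vec set \<Rightarrow> ('m, 'k) vec \<Rightarrow> ('m, 'k) vec set \<Rightarrow> ('m, 'k) vec \<Rightarrow> ('m, 'k) vec set" where
  "upd_vals V v Vpi vpi = aff Vpi vpi \<inter> aff (V_commute V Vpi) v"

text \<open>"X = x ==> Y = y" relative to epistemic state (V, v): outcome x of X is possible,
  and after updating on it, outcome y of Y is predicted with certainty.\<close>
definition infers ::
  "('m::finite, 'k::comm_ring_1) vec set \<Rightarrow> ('m, 'k) vec \<Rightarrow>
   ('m, 'k) vec set \<Rightarrow> ('m, 'k) vec \<Rightarrow> ('m, 'k) vec set \<Rightarrow> ('m, 'k) vec \<Rightarrow> bool" where
  "infers V v VX x VY y \<longleftrightarrow> outcome_possible V v VX x \<and>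
     (\<forall>v' \<in> upd_vals V v VX x. outcome_certain (upd_space V VX) v' VY y)"

text \<open>Joint outcome (x of X, y of Y) has nonzero probability: x is possible, and after
  updating on x, y is possible.\<close>
definition joint_possible ::
  "('m::finite, 'k::comm_ring_1) vec set \<Rightarrow> ('m, 'k) vec \<Rightarrow>
   ('m, 'k) vec set \<Rightarrow> ('m, 'k) vec \<Rightarrow> ('m, 'k) vec set \<Rightarrow> ('m, 'k) vec \<Rightarrow> bool" where
  "joint_possible V v VX x VY y \<longleftrightarrow> outcome_possible V v VX x \<and>
     (\<exists>v' \<in> upd_vals V v VX x. outcome_possible (upd_space V VX) v' VY y)"

definition FR_contradiction ::
  "('m::finite, 'k::comm_ring_1) vec set \<Rightarrow> ('m, 'k) vec \<Rightarrow>
   ('m, 'k) vec set \<Rightarrow> ('m, 'k) vec \<Rightarrow>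
   ('m, 'k) vec set \<Rightarrow> ('m, 'k) vec \<Rightarrow>
   ('m, 'k) vec set \<Rightarrow> ('m, 'k) vec \<Rightarrow> ('m, 'k) vec \<Rightarrow>
   ('m, 'k) vec set \<Rightarrow> ('m, 'k) vec \<Rightarrow> ('m, 'k) vec \<Rightarrow> bool" where
  "FR_contradiction V v VA a1 VB b1 VU uok ufail VW wok wfail \<longleftrightarrow>
     joint_possible V v VU uok VW wok \<and>
     infers V v VU uok VB b1 \<and>
     infers V v VB b1 VA a1 \<and>
     infers V v VA a1 VW wfail"

end

theory Submission
  imports Defs
begin

definition ringA :: "'k::comm_ring_1 itself \<Rightarrow> bool" where
  "ringA _ \<longleftrightarrow> (\<forall>L::'k set. 0 \<in> L \<and> (\<forall>a\<in>L. \<forall>b\<in>L. a + b \<in> L) \<and> (\<forall>r. \<forall>a\<in>L. r * a \<in> L) \<longrightarrow>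
      (\<forall>x. (\<forall>c. (\<forall>l\<in>L. c * l = 0) \<longrightarrow> c * x = 0) \<longrightarrow> x \<in> L))"

definition ringE :: "'k::comm_ring_1 itself \<Rightarrow> bool" where
  "ringE _ \<longleftrightarrow> (\<forall>G::('k \<times> 'k) set. (0,0) \<in> G \<and> (\<forall>p\<in>G. \<forall>q\<in>G. (fst p + fst q, snd p + snd q) \<in> G)
      \<and> (\<forall>r. \<forall>p\<in>G. (r * fst p, r * snd p) \<in> G) \<and> (\<forall>y. (0, y) \<in> G \<longrightarrow> y = 0) \<longrightarrow>
      (\<exists>c. \<forall>p\<in>G. snd p = c * fst p))"

lemma fieldlike_A:
  assumes inv: "\<forall>x::'k::comm_ring_1. x \<noteq> 0 \<longrightarrow> (\<exists>y. x * y = 1)"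
  shows "ringA TYPE('k)"
  unfolding ringA_def
proof (intro allI impI)
  fix L :: "'k set" and x
  assume L: "0 \<in> L \<and> (\<forall>a\<in>L. \<forall>b\<in>L. a + b \<in> L) \<and> (\<forall>r. \<forall>a\<in>L. r * a \<in> L)"
    and ann: "\<forall>c. (\<forall>l\<in>L. c * l = 0) \<longrightarrow> c * x = 0"
  show "x \<in> L"
  proof (cases "\<exists>u\<in>L. u \<noteq> 0")
    case True
    then obtain u w where "u \<in> L" "u * w = 1" using inv by blast
    then have "w * u \<in> L" using L by blast
    then have "x * (w * u) \<in> L" using L by blast
    then show ?thesis using \<open>u * w = 1\<close> by (simp add: mult.commute)
  next
    case False
    then have "x = 0" using ann[rule_format, of 1] by auto
    then show ?thesis using L by simp
  qed
qed

lemma fieldlike_E: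
  assumes inv: "\<forall>x::'k::comm_ring_1. x \<noteq> 0 \<longrightarrow> (\<exists>y. x * y = 1)"
  shows "ringE TYPE('k)"
  unfolding ringE_def
proof (intro allI impI)
  fix G :: "('k \<times> 'k) set"
  assume G: "(0,0) \<in> G \<and> (\<forall>p\<in>G. \<forall>q\<in>G. (fst p + fst q, snd p + snd q) \<in> G)
      \<and> (\<forall>r. \<forall>p\<in>G. (r * fst p, r * snd p) \<in> G) \<and> (\<forall>y. (0, y) \<in> G \<longrightarrow> y = 0)"
  have Gadd: "(a + c, b + d) \<in> G" if "(a, b) \<in> G" "(c, d) \<in> G" for a b c d
  proof -
    have "(fst (a,b) + fst (c,d), snd (a,b) + snd (c,d)) \<in> G" using G that by blast
    then show ?thesis by simp
  qed
  have Gsc: "(r * a, r * b) \<in> G" if "(a, b) \<in> G" for r a b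
  proof -
    have "(r * fst (a,b), r * snd (a,b)) \<in> G" using G that by blast
    then show ?thesis by simp
  qed
  have Gf: "\<And>y. (0, y) \<in> G \<Longrightarrow> y = 0" using G by blast
  show "\<exists>c. \<forall>p\<in>G. snd p = c * fst p"
  proof (cases "\<exists>p\<in>G. fst p \<noteq> 0")
    case True
    then obtain u y0 where uG: "(u, y0) \<in> G" "u \<noteq> 0" by force
    then obtain w where w: "u * w = 1" using inv by blast
    show ?thesis
    proof (intro exI ballI)
      fix p assume pG: "p \<in> G"
      obtain t y where p: "p = (t, y)" by (cases p)
      have 1: "(u * t, u * y) \<in> G" using Gsc pG p by blast
      have 2: "((-t) * u, (-t) * y0) \<in> G" using Gsc uG by blast
      have "(u * t + (-t) * u, u * y + (-t) * y0) \<in> G" using Gadd 1 2 by blast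
      moreover have "u * t + (-t) * u = 0" by (simp add: mult.commute)
      ultimately have "(0, u * y + (-t) * y0) \<in> G" by metis
      then have "u * y + (-t) * y0 = 0" by (rule Gf)
      then have "u * y = t * y0" by (simp add: algebra_simps)
      then have "w * (u * y) = w * (t * y0)" by simp
      then have "(u * w) * y = y0 * w * t" by (simp add: algebra_simps)
      then have "y = y0 * w * t" using w by simp
      then show "snd p = y0 * w * fst p" using p by simp
    qed
  next
    case False
    have "snd p = 0 * fst p" if "p \<in> G" for p
    proof -
      from that False have "(0, snd p) \<in> G" by (cases p) auto
      then show ?thesis by (simp add: Gf)
    qed
    then show ?thesis by blast
  qed
qed

lemma fin_char:
  assumes fin: "finite (UNIV :: 'k::comm_ring_1 set)"
  shows "CHAR('k) > 0"
proof -
  have "\<not> inj (of_nat :: nat \<Rightarrow> 'k)"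
  proof
    assume i: "inj (of_nat :: nat \<Rightarrow> 'k)"
    have "finite (range (of_nat :: nat \<Rightarrow> 'k))" using fin by (rule finite_subset[rotated]) simp
    then have "finite (UNIV :: nat set)" using i by (rule finite_imageD)
    then show False by simp
  qed
  then obtain a b :: nat where ab: "a \<noteq> b" "(of_nat a :: 'k) = of_nat b" unfolding inj_def by auto
  show "CHAR('k) > 0"
  proof -
    have "\<exists>n>0. of_nat n = (0::'k)"
    proof (cases "a < b")
      case True
      then have "a + (b - a) = b" by simp
      then have "(of_nat b :: 'k) = of_nat (a + (b - a))" by simp
      then have "(of_nat b :: 'k) = of_nat a + of_nat (b - a)" by (simp only: of_nat_add)
      then show ?thesis using ab True by (intro exI[of _ "b - a"]) simp
    next
      case False
      then have "b + (a - b) = a" by simp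
      then have "(of_nat a :: 'k) = of_nat (b + (a - b))" by simp
      then have "(of_nat a :: 'k) = of_nat b + of_nat (a - b)" by (simp only: of_nat_add)
      moreover have "a - b > 0" using False ab by simp
      ultimately show ?thesis using ab by (intro exI[of _ "a - b"]) simp
    qed
    then show ?thesis unfolding CHAR_pos_iff .
  qed
qed

lemma finite_ideal:
  fixes L :: "'k::comm_ring_1 set"
  assumes fin: "finite (UNIV :: 'k set)" and gen: "\<forall>x::'k. \<exists>n::nat. x = of_nat n"
    and L: "0 \<in> L" "\<forall>a\<in>L. \<forall>b\<in>L. a + b \<in> L" "\<forall>r. \<forall>a\<in>L. r * a \<in> L"
  shows "\<exists>e>0. of_nat e \<in> L \<and> e dvd CHAR('k) \<and> (\<forall>n. of_nat n \<in> L \<longrightarrow> e dvd n)"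
proof -
  have cpos: "CHAR('k) > 0" using fin_char[OF fin] .
  define c where "c = CHAR('k)"
  have c0: "of_nat c \<in> L" using L by (simp add: c_def)
  define N where "N = {n. n > 0 \<and> (of_nat n :: 'k) \<in> L}"
  have "c \<in> N" using cpos c0 by (simp add: N_def c_def)
  define e where "e = (LEAST n. n \<in> N)"
  have eN: "e \<in> N" unfolding e_def by (rule LeastI) fact
  have emin: "\<And>n. n \<in> N \<Longrightarrow> e \<le> n" unfolding e_def by (rule Least_le)
  have neg: "-a \<in> L" if "a \<in> L" for a
  proof -
    have "(-1) * a \<in> L" using L(3) that by blast
    then show ?thesis by simp
  qed
  have dv: "e dvd n" if "of_nat n \<in> L" for n
  proof (rule ccontr)
    assume nd: "\<not> e dvd n"
    have "(of_nat (n div e) :: 'k) * of_nat e \<in> L" using L eN by (simp add: N_def)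
    then have "of_nat n + - ((of_nat (n div e) :: 'k) * of_nat e) \<in> L" using L neg that by blast
    moreover have "of_nat n + - ((of_nat (n div e) :: 'k) * of_nat e) = of_nat (n mod e)"
    proof -
      have "(of_nat n :: 'k) = of_nat (n div e * e + n mod e)" by simp
      also have "\<dots> = of_nat (n div e) * of_nat e + of_nat (n mod e)" by (simp only: of_nat_add of_nat_mult)
      finally have "(of_nat n :: 'k) = of_nat (n div e) * of_nat e + of_nat (n mod e)" .
      then show ?thesis by simp
    qed
    ultimately have "n mod e \<in> N" using nd by (simp add: N_def mod_greater_zero_iff_not_dvd)
    moreover have "n mod e < e" using eN by (simp add: N_def)
    ultimately show False using emin by fastforce
  qed
  show ?thesis using eN dv c0 by (auto simp: N_def c_def)
qed

lemma dvd_cancel_aux: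
  fixes e k m :: nat
  assumes "k > 0" "e * k dvd k * m"
  shows "e dvd m"
  using assms by (simp add: mult.commute[of e k])

lemma finite_A:
  fixes dummy :: "'k::comm_ring_1 itself"
  assumes fin: "finite (UNIV :: 'k set)" and gen: "\<forall>x::'k. \<exists>n::nat. x = of_nat n"
  shows "ringA TYPE('k)"
  unfolding ringA_def
proof (intro allI impI)
  fix L :: "'k set" and x
  assume L: "0 \<in> L \<and> (\<forall>a\<in>L. \<forall>b\<in>L. a + b \<in> L) \<and> (\<forall>r. \<forall>a\<in>L. r * a \<in> L)"
    and ann: "\<forall>c. (\<forall>l\<in>L. c * l = 0) \<longrightarrow> c * x = 0"
  note L1 = conjunct1[OF L] and L2 = conjunct1[OF conjunct2[OF L]] and L3 = conjunct2[OF conjunct2[OF L]]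
  from finite_ideal[OF fin gen L1 L2 L3]
  obtain e where e: "e > 0" "of_nat e \<in> L" "e dvd CHAR('k)" "\<forall>n. of_nat n \<in> L \<longrightarrow> e dvd n"
    by blast
  define k where "k = CHAR('k) div e"
  have ck: "CHAR('k) = e * k" using e(3) by (simp add: k_def)
  have cpos: "CHAR('k) > 0" using fin_char[OF fin] .
  then have kpos: "k > 0" using ck by auto
  have "(of_nat k :: 'k) * l = 0" if "l \<in> L" for l
  proof -
    obtain n where n: "l = of_nat n" using gen by blast
    then have "e dvd n" using e(4) that by simp
    then obtain r where "n = e * r" by blast
    then have "k * n = CHAR('k) * r" using ck by (simp add: ac_simps)
    then have "CHAR('k) dvd k * n" by simp
    then have "(of_nat (k * n) :: 'k) = 0" by (simp only: of_nat_eq_0_iff_char_dvd)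
    then show ?thesis using n by simp
  qed
  then have "(of_nat k :: 'k) * x = 0" using ann by blast
  moreover obtain m where m: "x = of_nat m" using gen by blast
  ultimately have "(of_nat (k * m) :: 'k) = 0" by simp
  then have "CHAR('k) dvd k * m" by (simp only: of_nat_eq_0_iff_char_dvd)
  then have "e dvd m" using dvd_cancel_aux[of k e m] ck kpos by simp
  then obtain q where "m = e * q" by blast
  then have "x = of_nat q * of_nat e" using m by (simp add: mult.commute)
  moreover have "of_nat q * of_nat e \<in> L" using L3 e(2) by blast
  ultimately show "x \<in> L" by simp
qed

lemma finite_E:
  fixes dummy :: "'k::comm_ring_1 itself"
  assumes fin: "finite (UNIV :: 'k set)" and gen: "\<forall>x::'k. \<exists>n::nat. x = of_nat n"
  shows "ringE TYPE('k)"
  unfolding ringE_def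
proof (intro allI impI)
  fix G :: "('k \<times> 'k) set"
  assume G: "(0,0) \<in> G \<and> (\<forall>p\<in>G. \<forall>q\<in>G. (fst p + fst q, snd p + snd q) \<in> G)
      \<and> (\<forall>r. \<forall>p\<in>G. (r * fst p, r * snd p) \<in> G) \<and> (\<forall>y. (0, y) \<in> G \<longrightarrow> y = 0)"
  have G0: "(0,0) \<in> G" using G by blast
  have Gadd: "(a + c, b + d) \<in> G" if "(a, b) \<in> G" "(c, d) \<in> G" for a b c d
  proof -
    have "(fst (a,b) + fst (c,d), snd (a,b) + snd (c,d)) \<in> G" using G that by blast
    then show ?thesis by simp
  qed
  have Gsc: "(r * a, r * b) \<in> G" if "(a, b) \<in> G" for r a b
  proof -
    have "(r * fst (a,b), r * snd (a,b)) \<in> G" using G that by blast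
    then show ?thesis by simp
  qed
  have Gf: "\<And>y. (0, y) \<in> G \<Longrightarrow> y = 0" using G by blast
  define L where "L = fst ` G"
  have L1: "0 \<in> L" using G0 unfolding L_def by force
  have L2: "\<forall>a\<in>L. \<forall>b\<in>L. a + b \<in> L"
  proof (intro ballI)
    fix a b assume "a \<in> L" "b \<in> L"
    then obtain y z where "(a, y) \<in> G" "(b, z) \<in> G" unfolding L_def by force
    then have "(a + b, y + z) \<in> G" by (rule Gadd)
    then show "a + b \<in> L" unfolding L_def by force
  qed
  have L3: "\<forall>r. \<forall>a\<in>L. r * a \<in> L"
  proof (intro allI ballI)
    fix r a assume "a \<in> L"
    then obtain y where "(a, y) \<in> G" unfolding L_def by force
    then have "(r * a, r * y) \<in> G" by (rule Gsc)
    then show "r * a \<in> L" unfolding L_def by force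
  qed
  obtain e where e: "e > 0" "of_nat e \<in> L" "e dvd CHAR('k)" "\<forall>n. of_nat n \<in> L \<longrightarrow> e dvd n"
    using finite_ideal[OF fin gen L1 L2 L3] by blast
  define k where "k = CHAR('k) div e"
  have ck: "CHAR('k) = e * k" using e(3) by (simp add: k_def)
  have cpos: "CHAR('k) > 0" using fin_char[OF fin] .
  then have kpos: "k > 0" using ck by auto
  obtain y0 where y0: "(of_nat e, y0) \<in> G" using e(2) unfolding L_def by force
  have "(of_nat k * of_nat e, of_nat k * y0) \<in> G" using Gsc y0 by blast
  moreover have "(of_nat k * of_nat e :: 'k) = 0"
  proof -
    have "(of_nat (e * k) :: 'k) = 0" by (simp only: ck[symmetric] of_nat_CHAR)
    then show ?thesis by (simp add: mult.commute)
  qed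
  ultimately have "of_nat k * y0 = 0" using Gf by auto
  moreover obtain m where m: "y0 = of_nat m" using gen by blast
  ultimately have "(of_nat (k * m) :: 'k) = 0" by simp
  then have "CHAR('k) dvd k * m" by (simp only: of_nat_eq_0_iff_char_dvd)
  then have "e dvd m" using dvd_cancel_aux[of k e m] ck kpos by simp
  then obtain s where s: "m = e * s" by blast
  show "\<exists>c. \<forall>p\<in>G. snd p = c * fst p"
  proof (intro exI ballI)
    fix p assume pG: "p \<in> G"
    obtain t y where p: "p = (t, y)" by (cases p)
    obtain n where n: "t = of_nat n" using gen by blast
    have "t \<in> L" using pG p unfolding L_def by force
    then have "e dvd n" using e n by simp
    then obtain q where q: "n = e * q" by blast
    have "(- of_nat q * of_nat e, - of_nat q * y0) \<in> G" using Gsc y0 by blast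
    then have "(t + - of_nat q * of_nat e, y + - of_nat q * y0) \<in> G" using Gadd pG p by blast
    moreover have "t + - of_nat q * of_nat e = 0" using n q by simp
    ultimately have "(0, y + - of_nat q * y0) \<in> G" by metis
    then have "y + - of_nat q * y0 = 0" by (rule Gf)
    then have "y = of_nat q * y0" by (simp add: algebra_simps)
    then show "snd p = of_nat s * fst p" using m s n q p by (simp add: algebra_simps)
  qed
qed

lemma toy_AE:
  assumes "toy_scalars TYPE('k::comm_ring_1)"
  shows "ringA TYPE('k) \<and> ringE TYPE('k)"
proof -
  have fl: "\<forall>x::'k. x \<noteq> 0 \<longrightarrow> (\<exists>y. x * y = 1)"
    if \<phi>: "bij \<phi>" "\<forall>x y. \<phi> (x + y) = \<phi> x + \<phi> y" "\<forall>x y. \<phi> (x * y) = \<phi> x * \<phi> y" "\<phi> 1 = 1"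
    for \<phi> :: "'k \<Rightarrow> real"
  proof (intro allI impI)
    have inj: "inj \<phi>" using \<phi>(1) by (rule bij_is_inj)
    have z: "\<phi> 0 = 0" using \<phi>(2)[rule_format, of 0 0] by simp
    fix x :: 'k assume x0: "x \<noteq> 0"
    have nz: "\<phi> x \<noteq> 0"
    proof
      assume "\<phi> x = 0"
      then have "\<phi> x = \<phi> 0" using z by simp
      with inj have "x = 0" by (rule injD)
      then show False using x0 by simp
    qed
    define y where "y = inv \<phi> (1 / \<phi> x)"
    have "\<phi> y = 1 / \<phi> x" unfolding y_def using \<phi>(1) by (simp add: bij_is_surj surj_f_inv_f)
    then have "\<phi> (x * y) = \<phi> 1" using \<phi>(3,4) nz by simp
    with inj have "x * y = 1" by (rule injD)
    then show "\<exists>y. x * y = 1" by blast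
  qed
  show ?thesis
  proof (cases "finite (UNIV :: 'k set) \<and> (\<forall>x::'k. \<exists>n::nat. x = of_nat n)")
    case True
    then have a: "finite (UNIV :: 'k set)" and b: "\<forall>x::'k. \<exists>n::nat. x = of_nat n" by auto
    show ?thesis using finite_A[OF a b] finite_E[OF a b] by (rule conjI)
  next
    case False
    then obtain \<phi> :: "'k \<Rightarrow> real" where \<phi>: "bij \<phi>" "\<forall>x y. \<phi> (x + y) = \<phi> x + \<phi> y"
      "\<forall>x y. \<phi> (x * y) = \<phi> x * \<phi> y" "\<phi> 1 = 1"
      using assms unfolding toy_scalars_def by blast
    have f: "\<forall>x::'k. x \<noteq> 0 \<longrightarrow> (\<exists>y. x * y = 1)" using fl[OF \<phi>] .
    show ?thesis using fieldlike_A[OF f] fieldlike_E[OF f] by (rule conjI)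
  qed
qed

lemma ringA_D:
  fixes L :: "'k::comm_ring_1 set"
  assumes "ringA TYPE('k)" "0 \<in> L" "\<forall>a\<in>L. \<forall>b\<in>L. a + b \<in> L" "\<forall>r. \<forall>a\<in>L. r * a \<in> L"
    "\<forall>c. (\<forall>l\<in>L. c * l = 0) \<longrightarrow> c * x = 0"
  shows "x \<in> L"
proof -
  have "0 \<in> L \<and> (\<forall>a\<in>L. \<forall>b\<in>L. a + b \<in> L) \<and> (\<forall>r. \<forall>a\<in>L. r * a \<in> L) \<longrightarrow>
      (\<forall>x. (\<forall>c. (\<forall>l\<in>L. c * l = 0) \<longrightarrow> c * x = 0) \<longrightarrow> x \<in> L)"
    using assms(1) unfolding ringA_def by (rule spec)
  then show ?thesis using assms(2-5) by simp
qed

lemma ringE_D: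
  fixes G :: "('k::comm_ring_1 \<times> 'k) set"
  assumes "ringE TYPE('k)" "(0,0) \<in> G" "\<forall>p\<in>G. \<forall>q\<in>G. (fst p + fst q, snd p + snd q) \<in> G"
      "\<forall>r. \<forall>p\<in>G. (r * fst p, r * snd p) \<in> G" "\<forall>y. (0, y) \<in> G \<longrightarrow> y = 0"
  shows "\<exists>c. \<forall>p\<in>G. snd p = c * fst p"
proof -
  have "(0,0) \<in> G \<and> (\<forall>p\<in>G. \<forall>q\<in>G. (fst p + fst q, snd p + snd q) \<in> G)
      \<and> (\<forall>r. \<forall>p\<in>G. (r * fst p, r * snd p) \<in> G) \<and> (\<forall>y. (0, y) \<in> G \<longrightarrow> y = 0) \<longrightarrow>
      (\<exists>c. \<forall>p\<in>G. snd p = c * fst p)"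
    using assms(1) unfolding ringE_def by (rule spec)
  then show ?thesis using assms(2-5) by blast
qed

definition dot_on :: "'i set \<Rightarrow> ('i \<Rightarrow> 'k::comm_ring_1) \<Rightarrow> ('i \<Rightarrow> 'k) \<Rightarrow> 'k" where
  "dot_on I f x = (\<Sum>j\<in>I. f j * x j)"

definition gsub :: "('i \<Rightarrow> 'k::comm_ring_1) set \<Rightarrow> bool" where
  "gsub M \<longleftrightarrow> (\<lambda>j. 0) \<in> M \<and> (\<forall>x\<in>M. \<forall>y\<in>M. (\<lambda>j. x j + y j) \<in> M) \<and> (\<forall>c. \<forall>x\<in>M. (\<lambda>j. c * x j) \<in> M)"

lemma dual_gen:
  fixes I :: "'i set"
  assumes A: "ringA TYPE('k::comm_ring_1)" and E: "ringE TYPE('k)" and fin: "finite I"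
  shows "\<forall>M (x :: 'i \<Rightarrow> 'k). gsub M \<longrightarrow> (\<forall>f. (\<forall>m\<in>M. dot_on I f m = 0) \<longrightarrow> dot_on I f x = 0)
           \<longrightarrow> (\<exists>m\<in>M. \<forall>j\<in>I. m j = x j)"
  using fin
proof (induction I rule: finite_induct)
  case empty
  then show ?case by (auto simp: gsub_def)
next
  case (insert a I)
  show ?case
  proof (intro allI impI)
    fix M and x :: "'i \<Rightarrow> 'k"
    assume M: "gsub M" and H: "\<forall>f. (\<forall>m\<in>M. dot_on (insert a I) f m = 0) \<longrightarrow> dot_on (insert a I) f x = 0"
    have M': "(\<lambda>j. 0) \<in> M \<and> (\<forall>x\<in>M. \<forall>y\<in>M. (\<lambda>j. x j + y j) \<in> M) \<and> (\<forall>c. \<forall>x\<in>M. (\<lambda>j. c * x j) \<in> M)"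
      using M unfolding gsub_def .
    note M0 = conjunct1[OF M']
    note Madd = conjunct1[OF conjunct2[OF M'], rule_format]
    note Msc = conjunct2[OF conjunct2[OF M'], rule_format]
    have dins: "dot_on (insert a I) f m = f a * m a + dot_on I f m" for f m
      unfolding dot_on_def using insert.hyps by simp
    define L where "L = (\<lambda>m. m a) ` M"
    have L1: "0 \<in> L" using M0 unfolding L_def by force
    have L2: "\<forall>p\<in>L. \<forall>q\<in>L. p + q \<in> L"
    proof (intro ballI)
      fix p q assume "p \<in> L" "q \<in> L"
      then obtain m1 m2 where "m1 \<in> M" "m2 \<in> M" "p = m1 a" "q = m2 a" unfolding L_def by blast
      then show "p + q \<in> L" using Madd[of m1 m2] unfolding L_def by force
    qed
    have L3: "\<forall>r. \<forall>p\<in>L. r * p \<in> L"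
    proof (intro allI ballI)
      fix r p assume "p \<in> L"
      then obtain m1 where "m1 \<in> M" "p = m1 a" unfolding L_def by blast
      then show "r * p \<in> L" using Msc[of m1 r] unfolding L_def by force
    qed
    have "x a \<in> L"
    proof -
      have "c * x a = 0" if c: "\<forall>l\<in>L. c * l = 0" for c
      proof -
        define f :: "'i \<Rightarrow> 'k" where "f = (\<lambda>j. if j = a then c else 0)"
        have "dot_on I f m = 0" for m unfolding dot_on_def f_def using insert.hyps by (intro sum.neutral) auto
        then have "\<forall>m\<in>M. dot_on (insert a I) f m = 0" using c unfolding dins L_def f_def by auto
        then have "dot_on (insert a I) f x = 0" using H by blast
        then show ?thesis using \<open>\<And>m. dot_on I f m = 0\<close> unfolding dins f_def by simp
      qed
      then show ?thesis using ringA_D[OF A L1 L2 L3] by blast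
    qed
    then obtain m0 where m0: "m0 \<in> M" "m0 a = x a" unfolding L_def by force
    define M' where "M' = {m \<in> M. m a = 0}"
    have gM': "gsub M'" using M0 Madd Msc unfolding gsub_def M'_def by auto
    define z where "z = (\<lambda>j. x j - m0 j)"
    have Hz: "\<forall>f. (\<forall>m\<in>M'. dot_on I f m = 0) \<longrightarrow> dot_on I f z = 0"
    proof (intro allI impI)
      fix f assume f: "\<forall>m\<in>M'. dot_on I f m = 0"
      define G where "G = (\<lambda>m. (m a, - dot_on I f m)) ` M"
      have dadd: "dot_on I f (\<lambda>j. p j + q j) = dot_on I f p + dot_on I f q" for p q
        unfolding dot_on_def by (simp add: distrib_left sum.distrib)
      have dsc: "dot_on I f (\<lambda>j. r * p j) = r * dot_on I f p" for r p
        unfolding dot_on_def by (simp add: sum_distrib_left algebra_simps)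
      have "(0,0) \<in> G" unfolding G_def
        by (rule rev_image_eqI[OF M0]) (simp add: dot_on_def)
      moreover have "\<forall>p\<in>G. \<forall>q\<in>G. (fst p + fst q, snd p + snd q) \<in> G"
      proof (intro ballI)
        fix p q assume "p \<in> G" "q \<in> G"
        then obtain m1 m2 where "m1 \<in> M" "m2 \<in> M" "p = (m1 a, - dot_on I f m1)" "q = (m2 a, - dot_on I f m2)"
          unfolding G_def by blast
        then show "(fst p + fst q, snd p + snd q) \<in> G" unfolding G_def
          by (intro rev_image_eqI[OF Madd[of m1 m2]]) (simp_all add: dadd)
      qed
      moreover have "\<forall>r. \<forall>p\<in>G. (r * fst p, r * snd p) \<in> G"
      proof (intro allI ballI)
        fix r p assume "p \<in> G"
        then obtain m1 where "m1 \<in> M" "p = (m1 a, - dot_on I f m1)" unfolding G_def by blast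
        then show "(r * fst p, r * snd p) \<in> G" unfolding G_def
          by (intro rev_image_eqI[OF Msc[of m1 r]]) (simp_all add: dsc)
      qed
      moreover have "\<forall>y. (0, y) \<in> G \<longrightarrow> y = 0"
      proof (intro allI impI)
        fix y assume "(0, y) \<in> G"
        then obtain m where m: "m \<in> M" "m a = 0" "y = - dot_on I f m" unfolding G_def by auto
        then have "m \<in> M'" unfolding M'_def by simp
        then show "y = 0" using f m by simp
      qed
      ultimately obtain c where c: "\<forall>p\<in>G. snd p = c * fst p" using ringE_D[OF E] by blast
      define f' where "f' = f(a := c)"
      have f'I: "dot_on I f' m = dot_on I f m" for m
        unfolding dot_on_def f'_def using insert.hyps by (intro sum.cong) auto
      have "\<forall>m\<in>M. dot_on (insert a I) f' m = 0"
      proof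
        fix m assume "m \<in> M"
        then have "(m a, - dot_on I f m) \<in> G" unfolding G_def by (rule rev_image_eqI) simp
        then have "- dot_on I f m = c * m a" using c by force
        then have e: "c * m a = - dot_on I f m" by simp
        show "dot_on (insert a I) f' m = 0" unfolding dins f'I using e by (simp add: f'_def)
      qed
      then have "dot_on (insert a I) f' x = 0" "dot_on (insert a I) f' m0 = 0" using H m0 by blast+
      then have "c * x a + dot_on I f x = 0" "c * x a + dot_on I f m0 = 0" unfolding dins f'I using m0 by (simp_all add: f'_def)
      then have "dot_on I f x = dot_on I f m0" by (metis add_left_cancel)
      then show "dot_on I f z = 0" unfolding z_def dot_on_def by (simp add: right_diff_distrib sum_subtractf)
    qed
    obtain m1 where m1: "m1 \<in> M'" "\<forall>j\<in>I. m1 j = z j" using mp[OF mp[OF insert.IH[THEN spec[of _ M'], THEN spec[of _ z]] gM'] Hz] by blast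
    show "\<exists>m\<in>M. \<forall>j\<in>insert a I. m j = x j"
    proof (intro bexI ballI)
      show "(\<lambda>j. m0 j + m1 j) \<in> M" using Madd m0 m1 unfolding M'_def by blast
      fix j assume "j \<in> insert a I"
      then show "m0 j + m1 j = x j" using m0 m1 unfolding z_def M'_def by auto
    qed
  qed
qed

definition Jv :: "('m, 'k::comm_ring_1) vec \<Rightarrow> ('m, 'k) vec" where
  "Jv h = (\<lambda>(i, q). if q = Q then h (i, P) else - h (i, Q))"

lemma quad_UNIV: "(UNIV :: quad set) = {Q, P}"
  using quad.exhaust by auto

lemma fin_idx: "finite (UNIV :: ('m::finite \<times> quad) set)"
proof -
  have "finite ((UNIV :: 'm set) \<times> (UNIV :: quad set))" by (simp add: quad_UNIV)
  then show ?thesis by (simp add: UNIV_Times_UNIV)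
qed

lemma dotp_add: "dotp f (vadd x y) = dotp f x + dotp f y"
  unfolding dotp_def vadd_def by (simp add: distrib_left sum.distrib)

lemma dotp_addL: "dotp (vadd f g) x = dotp f x + dotp g x"
  unfolding dotp_def vadd_def by (simp add: distrib_right sum.distrib)

lemma dotp_scale: "dotp f (vscale c x) = c * dotp f x"
  unfolding dotp_def vscale_def by (simp add: sum_distrib_left algebra_simps)

lemma dotp_comm: "dotp f x = dotp x f"
  unfolding dotp_def by (simp add: mult.commute)

lemma dotp_zero: "dotp f vzero = 0"
  unfolding dotp_def vzero_def by simp

lemma dotp_zeroL: "dotp vzero f = 0"
  unfolding dotp_def vzero_def by simp

lemma vadd_zero: "vadd x vzero = x" "vadd vzero x = x"
  unfolding vadd_def vzero_def by auto

lemma aff_iff: "x \<in> aff X u \<longleftrightarrow> (\<forall>f\<in>X. dotp f x = dotp f u)"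
proof
  assume "x \<in> aff X u"
  then obtain p where p: "p \<in> perp X" "x = vadd p u" unfolding aff_def by blast
  then show "\<forall>f\<in>X. dotp f x = dotp f u" unfolding perp_def by (simp add: dotp_add)
next
  assume h: "\<forall>f\<in>X. dotp f x = dotp f u"
  define p where "p = vadd x (vscale (-1) u)"
  have "dotp f p = dotp f x - dotp f u" for f unfolding p_def by (simp add: dotp_add dotp_scale)
  then have "p \<in> perp X" using h unfolding perp_def by simp
  moreover have "x = vadd p u" unfolding p_def vadd_def vscale_def by simp
  ultimately show "x \<in> aff X u" unfolding aff_def by blast
qed

lemma sum_UNIV_pair:
  fixes F :: "'m::finite \<times> quad \<Rightarrow> 'k::comm_ring_1"
  shows "(\<Sum>j\<in>UNIV. F j) = (\<Sum>i\<in>UNIV. F (i, Q) + F (i, P))"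
proof -
  have "(\<Sum>j\<in>UNIV. F j) = (\<Sum>j\<in>(UNIV :: 'm set) \<times> (UNIV :: quad set). F j)"
    by (simp add: UNIV_Times_UNIV)
  also have "\<dots> = (\<Sum>i\<in>UNIV. \<Sum>q\<in>UNIV. F (i, q))"
    by (simp add: sum.cartesian_product)
  also have "\<dots> = (\<Sum>i\<in>UNIV. F (i, Q) + F (i, P))"
    by (simp add: quad_UNIV)
  finally show ?thesis .
qed

lemma dotp_J: "dotp f (Jv h) = pbracket f (h :: ('m::finite, 'k::comm_ring_1) vec)"
  unfolding dotp_def pbracket_def Jv_def sum_UNIV_pair by simp

lemma Jv_add: "Jv (vadd x y) = vadd (Jv x) (Jv y)"
  unfolding Jv_def vadd_def by (auto simp: fun_eq_iff)

lemma Jv_scale: "Jv (vscale c x) = vscale c (Jv x)"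
  unfolding Jv_def vscale_def by (auto simp: fun_eq_iff)

lemma Jv_zero: "Jv vzero = vzero"
  unfolding Jv_def vzero_def by (auto simp: fun_eq_iff)

lemma perp_sub: "submod (perp X)"
  unfolding submod_def perp_def by (simp add: dotp_add dotp_scale dotp_zero)

lemma sumsp_sub:
  assumes "submod A" "submod B"
  shows "submod (sumsp A B)"
proof -
  have A0: "vzero \<in> A" and Aadd: "\<And>x y. x \<in> A \<Longrightarrow> y \<in> A \<Longrightarrow> vadd x y \<in> A"
    and Asc: "\<And>c x. x \<in> A \<Longrightarrow> vscale c x \<in> A" using assms(1) unfolding submod_def by auto
  have B0: "vzero \<in> B" and Badd: "\<And>x y. x \<in> B \<Longrightarrow> y \<in> B \<Longrightarrow> vadd x y \<in> B"
    and Bsc: "\<And>c x. x \<in> B \<Longrightarrow> vscale c x \<in> B" using assms(2) unfolding submod_def by auto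
  have "vzero = vadd vzero vzero" by (simp add: vadd_zero)
  then have "vzero \<in> sumsp A B" using A0 B0 unfolding sumsp_def by blast
  moreover have "vadd x y \<in> sumsp A B" if xy: "x \<in> sumsp A B" "y \<in> sumsp A B" for x y
  proof -
    obtain a b a' b' where ab: "a \<in> A" "b \<in> B" "x = vadd a b" "a' \<in> A" "b' \<in> B" "y = vadd a' b'"
      using xy unfolding sumsp_def by blast
    have "vadd x y = vadd (vadd a a') (vadd b b')"
      unfolding ab vadd_def by (simp add: fun_eq_iff algebra_simps)
    moreover have "vadd a a' \<in> A" "vadd b b' \<in> B" using ab Aadd Badd by auto
    ultimately show ?thesis unfolding sumsp_def by blast
  qed
  moreover have "vscale c x \<in> sumsp A B" if xy: "x \<in> sumsp A B" for c x
  proof -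
    obtain a b where ab: "a \<in> A" "b \<in> B" "x = vadd a b"
      using xy unfolding sumsp_def by blast
    have "vscale c x = vadd (vscale c a) (vscale c b)"
      unfolding ab vadd_def vscale_def by (simp add: fun_eq_iff algebra_simps)
    moreover have "vscale c a \<in> A" "vscale c b \<in> B" using ab Asc Bsc by auto
    ultimately show ?thesis unfolding sumsp_def by blast
  qed
  ultimately show ?thesis unfolding submod_def by blast
qed

lemma submod_gsub: "submod M \<Longrightarrow> gsub M"
  unfolding submod_def gsub_def vzero_def vadd_def vscale_def by simp

lemma duality:
  fixes M :: "('m::finite, 'k::comm_ring_1) vec set"
  assumes AE: "ringA TYPE('k) \<and> ringE TYPE('k)" and M: "submod M"
    and H: "\<And>f. (\<forall>m\<in>M. dotp f m = 0) \<Longrightarrow> dotp f x = 0"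
  shows "x \<in> M"
proof -
  have "\<forall>M (x :: ('m, 'k) vec). gsub M \<longrightarrow> (\<forall>f. (\<forall>m\<in>M. dot_on UNIV f m = 0) \<longrightarrow> dot_on UNIV f x = 0)
           \<longrightarrow> (\<exists>m\<in>M. \<forall>j\<in>UNIV. m j = x j)"
    using AE fin_idx by (intro dual_gen) auto
  moreover have "dot_on UNIV f m = dotp f m" for f m :: "('m, 'k) vec"
    unfolding dot_on_def dotp_def ..
  ultimately have "\<exists>m\<in>M. \<forall>j\<in>UNIV. m j = x j" using submod_gsub[OF M] H by simp
  then obtain m where "m \<in> M" "\<forall>j. m j = x j" by blast
  then show ?thesis by (metis ext)
qed

lemma aff_sumsp:
  assumes "x \<in> aff (sumsp X Y) u" "vzero \<in> X" "vzero \<in> Y"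
  shows "x \<in> aff X u" "x \<in> aff Y u"
proof -
  have h: "\<forall>g\<in>sumsp X Y. dotp g x = dotp g u" using assms(1) by (simp add: aff_iff)
  have "vadd f vzero \<in> sumsp X Y" if "f \<in> X" for f using that assms(3) unfolding sumsp_def by blast
  then show "x \<in> aff X u" using h by (simp add: aff_iff vadd_zero)
  have "vadd vzero f \<in> sumsp X Y" if "f \<in> Y" for f using that assms(2) unfolding sumsp_def by blast
  then show "x \<in> aff Y u" using h by (simp add: aff_iff vadd_zero)
qed

lemma aff_refl: "x \<in> aff X x"
  by (simp add: aff_iff)

lemma aff_sumsp_I:
  assumes "x \<in> aff X u" "x \<in> aff Y u"
  shows "x \<in> aff (sumsp X Y) u"
  using assms unfolding aff_iff sumsp_def by (auto simp: dotp_addL)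

lemma inf_pt:
  assumes "infers V v X xo Y yo" "x \<in> aff X xo" "x \<in> aff (V_commute V X) v"
  shows "x \<in> aff Y yo"
proof -
  have "x \<in> upd_vals V v X xo" using assms(2,3) unfolding upd_vals_def by blast
  then have "aff (upd_space V X) x \<subseteq> aff Y yo"
    using assms(1) unfolding infers_def outcome_certain_def by blast
  moreover have "x \<in> aff (upd_space V X) x" by (rule aff_refl)
  ultimately show ?thesis by blast
qed

lemma aff_Vc: "x \<in> aff V v \<Longrightarrow> x \<in> aff (V_commute V X) v"
  unfolding aff_iff V_commute_def by simp

lemma pbracket_disj:
  assumes "supported_on sys {SysS, SysB} {g}" "supported_on sys {SysR, SysA} {h}"
  shows "pbracket g h = 0"
proof -
  have "g (i, Q) * h (i, P) - g (i, P) * h (i, Q) = 0" for i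
  proof (cases "sys i \<in> {SysS, SysB}")
    case True
    then have "sys i \<notin> {SysR, SysA}" by auto
    then show ?thesis using assms(2) unfolding supported_on_def by simp
  next
    case False
    then show ?thesis using assms(1) unfolding supported_on_def by simp
  qed
  then show ?thesis unfolding pbracket_def by simp
qed

theorem theorem2:
  fixes sys :: "'m::finite \<Rightarrow> sysname"
    and V :: "('m, 'k::comm_ring_1) vec set" and v :: "('m, 'k) vec"
    and VA VB VU VW :: "('m, 'k) vec set"
    and a1 b1 uok ufail wok wfail :: "('m, 'k) vec"
  assumes "toy_scalars TYPE('k)"
    and "valid_state V v"
    and "valid_meas VA" and "supported_on sys {SysR} VA"
    and "valid_meas VB" and "supported_on sys {SysS} VB"
    and "valid_meas VU" and "supported_on sys {SysR, SysA} VU"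
    and "valid_meas VW" and "supported_on sys {SysS, SysB} VW"
    and "vadd uok (vscale (-1) ufail) \<notin> perp VU"
    and "vadd wok (vscale (-1) wfail) \<notin> perp VW"
  shows "\<not> FR_contradiction V v VA a1 VB b1 VU uok ufail VW wok wfail"
proof
  assume FR: "FR_contradiction V v VA a1 VB b1 VU uok ufail VW wok wfail"
  have AE: "ringA TYPE('k) \<and> ringE TYPE('k)" using assms(1) by (rule toy_AE)
  have subV: "submod V" using assms(2) unfolding valid_state_def by simp
  have subU: "submod VU" and isoU: "isotropic VU" using assms(7) unfolding valid_meas_def by simp_all
  have V0: "vzero \<in> V" using subV unfolding submod_def by simp
  have U0: "vzero \<in> VU" using subU unfolding submod_def by simp
  have Vc0: "vzero \<in> V_commute V VU" using V0 unfolding V_commute_def pbracket_def vzero_def by simp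
  have J: "joint_possible V v VU uok VW wok" and I1: "infers V v VU uok VB b1"
    and I2: "infers V v VB b1 VA a1" and I3: "infers V v VA a1 VW wfail"
    using FR unfolding FR_contradiction_def by simp_all
  obtain x0 where x0: "x0 \<in> aff V v" "x0 \<in> aff VU uok"
    using J unfolding joint_possible_def outcome_possible_def by blast
  obtain v' y where v': "v' \<in> aff VU uok" "v' \<in> aff (V_commute V VU) v"
    and y: "y \<in> aff (upd_space V VU) v'" "y \<in> aff VW wok"
    using J unfolding joint_possible_def outcome_possible_def upd_vals_def by blast
  have yU: "y \<in> aff VU uok" and yC: "y \<in> aff (V_commute V VU) v"
  proof -
    have "y \<in> aff VU v'" "y \<in> aff (V_commute V VU) v'"
      using aff_sumsp[OF y(1)[unfolded upd_space_def] U0 Vc0] by simp_all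
    then show "y \<in> aff VU uok" "y \<in> aff (V_commute V VU) v" using v' unfolding aff_iff by simp_all
  qed
  have CH: "z \<in> aff VW wfail" if z: "z \<in> aff V v" "z \<in> aff VU uok" for z
  proof -
    have "z \<in> aff VB b1" using inf_pt[OF I1 z(2) aff_Vc[OF z(1)]] .
    then have "z \<in> aff VA a1" using inf_pt[OF I2 _ aff_Vc[OF z(1)]] by blast
    then show "z \<in> aff VW wfail" using inf_pt[OF I3 _ aff_Vc[OF z(1)]] by blast
  qed
  define d where "d = vadd y (vscale (-1) x0)"
  have dd: "dotp f d = dotp f y - dotp f x0" for f unfolding d_def by (simp add: dotp_add dotp_scale)
  have dU: "dotp u d = 0" if "u \<in> VU" for u using that yU x0(2) unfolding dd aff_iff by simp
  have dC: "dotp f d = 0" if "f \<in> V_commute V VU" for f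
  proof -
    have "f \<in> V" using that unfolding V_commute_def by simp
    then have "dotp f x0 = dotp f v" using x0(1) unfolding aff_iff by simp
    moreover have "dotp f y = dotp f v" using yC that unfolding aff_iff by simp
    ultimately show ?thesis unfolding dd by simp
  qed
  define M where "M = sumsp (perp V) (Jv ` VU)"
  have subJ: "submod (Jv ` VU)"
  proof -
    have "Jv vzero \<in> Jv ` VU" using U0 by (rule imageI)
    then have "vzero \<in> Jv ` VU" by (simp add: Jv_zero)
    moreover have "vadd x y \<in> Jv ` VU" if xy: "x \<in> Jv ` VU" "y \<in> Jv ` VU" for x y
    proof -
      obtain a b where "a \<in> VU" "b \<in> VU" "x = Jv a" "y = Jv b" using xy by blast
      moreover have "vadd a b \<in> VU" using subU \<open>a \<in> VU\<close> \<open>b \<in> VU\<close> unfolding submod_def by blast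
      ultimately have "Jv (vadd a b) \<in> Jv ` VU" by blast
      then show ?thesis using \<open>x = Jv a\<close> \<open>y = Jv b\<close> by (simp add: Jv_add)
    qed
    moreover have "vscale c x \<in> Jv ` VU" if xy: "x \<in> Jv ` VU" for c x
    proof -
      obtain a where "a \<in> VU" "x = Jv a" using xy by blast
      moreover have "vscale c a \<in> VU" using subU \<open>a \<in> VU\<close> unfolding submod_def by blast
      ultimately have "Jv (vscale c a) \<in> Jv ` VU" by blast
      then show ?thesis using \<open>x = Jv a\<close> by (simp add: Jv_scale)
    qed
    ultimately show ?thesis unfolding submod_def by blast
  qed
  have subM: "submod M" unfolding M_def by (rule sumsp_sub[OF perp_sub subJ])
  have "d \<in> M"
  proof (rule duality[OF AE subM])
    fix f assume f: "\<forall>m\<in>M. dotp f m = 0"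
    have fV: "f \<in> V"
    proof (rule duality[OF AE subV])
      fix g assume g: "\<forall>m\<in>V. dotp g m = 0"
      then have "g \<in> perp V" unfolding perp_def by (simp add: dotp_comm)
      moreover have "Jv vzero \<in> Jv ` VU" using U0 by (rule imageI)
      ultimately have "vadd g (Jv vzero) \<in> M" unfolding M_def sumsp_def by blast
      then have "dotp f g = 0" using f by (simp add: vadd_zero Jv_zero)
      then show "dotp g f = 0" by (simp add: dotp_comm)
    qed
    have "pbracket f h = 0" if "h \<in> VU" for h
    proof -
      have "vzero \<in> perp V" unfolding perp_def by (simp add: dotp_zero)
      then have "vadd vzero (Jv h) \<in> M" unfolding M_def sumsp_def using that by blast
      then have "dotp f (Jv h) = 0" using f by (simp add: vadd_zero)
      then show ?thesis by (simp add: dotp_J)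
    qed
    then have "f \<in> V_commute V VU" using fV unfolding V_commute_def by blast
    then show "dotp f d = 0" by (rule dC)
  qed
  then obtain p u0 where p: "p \<in> perp V" and u0: "u0 \<in> VU" and dpu: "d = vadd p (Jv u0)"
    unfolding M_def sumsp_def by blast
  define z where "z = vadd x0 p"
  have zV: "z \<in> aff V v" using x0(1) p unfolding z_def aff_iff perp_def by (simp add: dotp_add)
  have zU: "z \<in> aff VU uok"
  proof -
    have "dotp u p = 0" if "u \<in> VU" for u
    proof -
      have "dotp u d = dotp u p + pbracket u u0" unfolding dpu by (simp add: dotp_add dotp_J)
      moreover have "pbracket u u0 = 0" using isoU that u0 unfolding isotropic_def by blast
      ultimately show ?thesis using dU[OF that] by simp
    qed
    then show ?thesis using x0(2) unfolding z_def aff_iff by (simp add: dotp_add)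
  qed
  have zW: "z \<in> aff VW wfail" using CH[OF zV zU] .
  have "dotp g (vadd wok (vscale (-1) wfail)) = 0" if g: "g \<in> VW" for g
  proof -
    have sg: "supported_on sys {SysS, SysB} {g}" using assms(10) g unfolding supported_on_def by blast
    have su: "supported_on sys {SysR, SysA} {u0}" using assms(8) u0 unfolding supported_on_def by blast
    have "dotp g y = dotp g x0 + dotp g d" unfolding dd by simp
    also have "\<dots> = dotp g z + pbracket g u0" unfolding dpu z_def by (simp add: dotp_add dotp_J)
    also have "\<dots> = dotp g wfail" using zW g pbracket_disj[OF sg su] unfolding aff_iff by simp
    finally have "dotp g y = dotp g wfail" .
    moreover have "dotp g y = dotp g wok" using y(2) g unfolding aff_iff by simp
    ultimately show ?thesis by (simp add: dotp_add dotp_scale)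
  qed
  then have "vadd wok (vscale (-1) wfail) \<in> perp VW" unfolding perp_def by blast
  then show False using assms(12) by contradiction
qed

end
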